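(* Let $r\in\{0,1\}$, $n\ge1$ and $\lambda\in\mathcal P_r(n)$. Then \[ I_\lambda=\sum_{D}\mathrm{sign}(D), \] where the sum is over all standard domino tableaux $D$ of shape $\lambda$.
   Context: Partitions are identified with Young diagrams in English notation. A domino is a set of two cells sharing an edge. $\delta_0=\emptyset$, $\delta_1=(1)$; $\mathcal P_r(n)$ is the set of partitions with 2-core $\delta_r$ (the 2-core is obtained by repeatedly removing dominoes while staying a partition) and size $|\delta_r|+2n$. A standard domino tableau of shape $\lambda\in\mathcal P_r(n)$ is a chain $\delta_r=\lambda^0\subset\cdots\subset\lambda^n=\lambda$ with each $\lambda^k/\lambda^{k-1}$ a domino (the domino with value $k$). For a standard Young tableau $T$ its reading word reads the rows from top to bottom, each from left to right, and $\mathrm{sign}(T)$ is the sign of this permutation; $I_\lambda=\sum_T\mathrm{sign}(T)$ over all standard Young tableaux of shape $\lambda$. For a standard domino tableau $D$, $T(D)$ is the standard Young tableau obtained (for $r=0$) by filling the domino with value $k$ with $2k-1,2k$, or (for $r=1$) by putting $1$ in the core cell and filling the domino with value $k$ with $2k,2k+1$, the smaller number in the left (horizontal domino) or upper (vertical domino) cell; $\mathrm{sign}(D)=\mathrm{sign}(T(D))$. *)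

theory Defs
  imports "HOL-Combinatorics.Permutations"
begin

text \<open>Partitions as weakly decreasing lists of positive integers; cells (row, column),
  0-indexed, English notation.\<close>

definition is_partition :: "nat list \<Rightarrow> bool" where
  "is_partition lam \<longleftrightarrow> sorted_wrt (\<ge>) lam \<and> 0 \<notin> set lam"

definition diagram :: "nat list \<Rightarrow> (nat \<times> nat) set" where
  "diagram lam = {(i, j). i < length lam \<and> j < lam ! i}"

definition psize :: "nat list \<Rightarrow> nat" where
  "psize lam = sum_list lam"

definition is_domino :: "(nat \<times> nat) set \<Rightarrow> bool" where
  "is_domino S \<longleftrightarrow> (\<exists>i j. S = {(i, j), (i, Suc j)} \<or> S = {(i, j), (Suc i, j)})"

definition domino_step :: "nat list \<Rightarrow> nat list \<Rightarrow> bool" where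
  "domino_step mu lam \<longleftrightarrow> is_partition mu \<and> is_partition lam \<and>
     diagram mu \<subseteq> diagram lam \<and> is_domino (diagram lam - diagram mu)"

definition has_two_core :: "nat list \<Rightarrow> nat list \<Rightarrow> bool" where
  "has_two_core lam mu \<longleftrightarrow> (\<lambda>a b. domino_step b a)\<^sup>*\<^sup>* lam mu \<and> \<not> (\<exists>nu. domino_step nu mu)"

definition delta :: "nat \<Rightarrow> nat list" where
  "delta r = (if r = 0 then [] else [1])"

definition P_set :: "nat \<Rightarrow> nat \<Rightarrow> nat list set" where
  "P_set r n = {lam. is_partition lam \<and> has_two_core lam (delta r) \<and>
                     psize lam = psize (delta r) + 2 * n}"

definition syt :: "nat list \<Rightarrow> ((nat \<times> nat) \<Rightarrow> nat) set" where
  "syt lam = {T. bij_betw T (diagram lam) {1..psize lam} \<and>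
     (\<forall>c. c \<notin> diagram lam \<longrightarrow> T c = 0) \<and>
     (\<forall>i j. (i, Suc j) \<in> diagram lam \<longrightarrow> T (i, j) < T (i, Suc j)) \<and>
     (\<forall>i j. (Suc i, j) \<in> diagram lam \<longrightarrow> T (i, j) < T (Suc i, j))}"

definition reading_word :: "nat list \<Rightarrow> ((nat \<times> nat) \<Rightarrow> nat) \<Rightarrow> nat list" where
  "reading_word lam T = concat (map (\<lambda>i. map (\<lambda>j. T (i, j)) [0..<lam ! i]) [0..<length lam])"

definition word_perm :: "nat list \<Rightarrow> nat \<Rightarrow> nat" where
  "word_perm w = (\<lambda>k. if 1 \<le> k \<and> k \<le> length w then w ! (k - 1) else k)"

definition tsign :: "nat list \<Rightarrow> ((nat \<times> nat) \<Rightarrow> nat) \<Rightarrow> int" where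
  "tsign lam T = sign (word_perm (reading_word lam T))"

definition I_lam :: "nat list \<Rightarrow> int" where
  "I_lam lam = (\<Sum>T\<in>syt lam. tsign lam T)"

text \<open>Standard domino tableaux of shape lam (core delta r, n dominoes): chains
  delta r = ch!0 \<subset> ... \<subset> ch!n = lam, each step adding a domino.\<close>
definition sdt :: "nat \<Rightarrow> nat \<Rightarrow> nat list \<Rightarrow> nat list list set" where
  "sdt r n lam = {ch. length ch = Suc n \<and> ch ! 0 = delta r \<and> ch ! n = lam \<and>
     (\<forall>k<n. domino_step (ch ! k) (ch ! Suc k))}"

text \<open>The Young tableau T(D): core cell gets 1 (r = 1); the domino with value k gets
  r+2k-1 in its left/upper cell (the one with smaller i+j) and r+2k in the other.\<close>
definition dom_to_syt :: "nat \<Rightarrow> nat \<Rightarrow> nat list list \<Rightarrow> (nat \<times> nat) \<Rightarrow> nat" where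
  "dom_to_syt r n ch = (\<lambda>(i, j).
     if (i, j) \<in> diagram (ch ! 0) then 1
     else if (\<exists>k\<in>{1..n}. (i, j) \<in> diagram (ch ! k) - diagram (ch ! (k - 1))) then
       (let k = (LEAST k. (i, j) \<in> diagram (ch ! k));
            D = diagram (ch ! k) - diagram (ch ! (k - 1)) in
        if (\<forall>(a, b)\<in>D. i + j \<le> a + b) then r + 2 * k - 1 else r + 2 * k)
     else 0)"

definition dsign :: "nat \<Rightarrow> nat \<Rightarrow> nat list \<Rightarrow> nat list list \<Rightarrow> int" where
  "dsign r n lam ch = tsign lam (dom_to_syt r n ch)"

end

theory Submission
  imports Defs "HOL-Library.FuncSet"
begin


lemma part_down:
  assumes "is_partition mu" "(i, j) \<in> diagram mu" "i' \<le> i" "j' \<le> j"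
  shows "(i', j') \<in> diagram mu"
proof -
  have "i < length mu" "j < mu ! i" using assms(2) by (auto simp: diagram_def)
  moreover have "mu ! i \<le> mu ! i'"
    using assms(1,3) \<open>i < length mu\<close> unfolding is_partition_def
    by (cases "i' = i") (auto simp: sorted_wrt_iff_nth_less)
  ultimately show ?thesis using assms(3,4) by (auto simp: diagram_def)
qed

lemma card_diagram: "card (diagram mu) = sum_list mu"
proof -
  have "diagram mu = Sigma {..<length mu} (\<lambda>i. {..<mu ! i})" by (auto simp: diagram_def)
  hence "card (diagram mu) = (\<Sum>i<length mu. mu ! i)" by simp
  also have "\<dots> = sum_list mu" by (simp add: sum_list_sum_nth atLeast0LessThan)
  finally show ?thesis .
qed

lemma finite_diagram[simp]: "finite (diagram mu)"
proof -
  have "diagram mu \<subseteq> {..<length mu} \<times> {..<Max (set (0 # mu)) + 1}"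
  proof
    fix x assume "x \<in> diagram mu"
    then obtain i j where x: "x = (i, j)" "i < length mu" "j < mu ! i" by (auto simp: diagram_def)
    have "mu ! i \<le> Max (set (0 # mu))" using x(2) by (intro Max_ge) auto
    hence "j < Max (set (0 # mu)) + 1" using x(3) by linarith
    thus "x \<in> {..<length mu} \<times> {..<Max (set (0 # mu)) + 1}" using x by simp
  qed
  thus ?thesis by (rule finite_subset) auto
qed

lemma part_row0:
  assumes "is_partition a"
  shows "(i, 0) \<in> diagram a \<longleftrightarrow> i < length a"
proof -
  have "i < length a \<Longrightarrow> a ! i > 0" using assms unfolding is_partition_def
    by (metis gr0I nth_mem)
  thus ?thesis by (auto simp: diagram_def)
qed

lemma part_eq:
  assumes "is_partition a" "is_partition b" "diagram a = diagram b"
  shows "a = b"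
proof -
  have "\<forall>i. i < length a \<longleftrightarrow> i < length b"
    using part_row0[OF assms(1)] part_row0[OF assms(2)] assms(3) by auto
  hence len: "length a = length b" by (metis less_irrefl nat_neq_iff)
  show ?thesis
  proof (rule nth_equalityI[OF len])
    fix i assume i: "i < length a"
    have "\<forall>j. j < a ! i \<longleftrightarrow> j < b ! i"
      using assms(3) i len unfolding diagram_def set_eq_iff by auto
    thus "a ! i = b ! i" by (metis less_irrefl nat_neq_iff)
  qed
qed

lemma downclosed_part:
  assumes fin: "finite S"
    and dc: "\<And>i j i' j'. (i, j) \<in> S \<Longrightarrow> i' \<le> i \<Longrightarrow> j' \<le> j \<Longrightarrow> (i', j') \<in> S"
  shows "\<exists>mu. is_partition mu \<and> diagram mu = S"
proof -
  obtain b where b: "\<forall>x\<in>S. fst x < b \<and> snd x < b"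
  proof -
    obtain b1 where "\<forall>x\<in>fst ` S. x < b1" using fin finite_nat_set_iff_bounded by blast
    moreover obtain b2 where "\<forall>x\<in>snd ` S. x < b2" using fin finite_nat_set_iff_bounded by blast
    ultimately show ?thesis using that[of "max b1 b2"] by fastforce
  qed
  define len where "len i = (LEAST j. (i, j) \<notin> S)" for i
  have lenS: "(i, j) \<in> S \<longleftrightarrow> j < len i" for i j
  proof
    assume "(i, j) \<in> S"
    show "j < len i"
    proof (rule ccontr)
      assume "\<not> j < len i"
      hence "(i, len i) \<in> S" using dc[OF \<open>(i, j) \<in> S\<close>] by auto
      moreover have "(i, len i) \<notin> S" unfolding len_def
        by (rule LeastI[of _ b]) (use b in auto)
      ultimately show False by simp
    qed
  next
    assume "j < len i" thus "(i, j) \<in> S" unfolding len_def using not_less_Least by blast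
  qed
  define m where "m = (LEAST i. (i, 0) \<notin> S)"
  have mS: "(i, 0) \<in> S \<longleftrightarrow> i < m" for i
  proof
    assume "(i, 0) \<in> S"
    show "i < m"
    proof (rule ccontr)
      assume "\<not> i < m"
      hence "(m, 0) \<in> S" using dc[OF \<open>(i, 0) \<in> S\<close>] by auto
      moreover have "(m, 0) \<notin> S" unfolding m_def
        by (rule LeastI[of _ b]) (use b in auto)
      ultimately show False by simp
    qed
  next
    assume "i < m" thus "(i, 0) \<in> S" unfolding m_def using not_less_Least by blast
  qed
  define mu where "mu = map len [0..<m]"
  have mono: "len i' \<le> len i" if "i \<le> i'" for i i'
  proof (rule ccontr)
    assume "\<not> len i' \<le> len i"
    hence "(i', len i) \<in> S" using lenS by auto
    hence "(i, len i) \<in> S" using dc that by blast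
    thus False using lenS by auto
  qed
  have "is_partition mu"
    unfolding is_partition_def mu_def
  proof
    show "sorted_wrt (\<ge>) (map len [0..<m])"
      by (simp add: sorted_wrt_iff_nth_less mono)
    show "0 \<notin> set (map len [0..<m])"
    proof
      assume "0 \<in> set (map len [0..<m])"
      then obtain x where "x < m" "len x = 0" by auto
      hence "(x, 0) \<in> S" using mS by simp
      thus False using lenS \<open>len x = 0\<close> by simp
    qed
  qed
  moreover have "diagram mu = S"
  proof -
    have "(i, j) \<in> S \<longleftrightarrow> i < m \<and> j < len i" for i j
    proof
      assume h: "(i, j) \<in> S"
      have "(i, 0) \<in> S" using dc[OF h] by simp
      thus "i < m \<and> j < len i" using h mS lenS by simp
    next
      assume "i < m \<and> j < len i" thus "(i, j) \<in> S" using lenS by simp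
    qed
    thus ?thesis by (auto simp: diagram_def mu_def)
  qed
  ultimately show ?thesis by blast
qed

lemma inj_card_bij:
  assumes "finite B" "inj_on f A" "f ` A \<subseteq> B" "card A = card B"
  shows "bij_betw f A B"
  unfolding bij_betw_def
  using assms card_image card_subset_eq by metis

lemma word_perm_perm:
  assumes "distinct w" "set w = {1..length w}"
  shows "permutation (word_perm w)"
proof -
  let ?N = "length w"
  have "inj_on (word_perm w) {1..?N}"
  proof
    fix x y assume "x \<in> {1..?N}" "y \<in> {1..?N}" "word_perm w x = word_perm w y"
    hence "w ! (x - 1) = w ! (y - 1)" "x - 1 < ?N" "y - 1 < ?N" by (auto simp: word_perm_def)
    hence "x - 1 = y - 1" using assms(1) nth_eq_iff_index_eq by blast
    thus "x = y" using \<open>x \<in> _\<close> \<open>y \<in> _\<close> by auto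
  qed
  moreover have "word_perm w ` {1..?N} \<subseteq> {1..?N}"
  proof
    fix y assume "y \<in> word_perm w ` {1..?N}"
    then obtain x where "x \<in> {1..?N}" "y = w ! (x - 1)" by (auto simp: word_perm_def)
    hence "y \<in> set w" by auto
    thus "y \<in> {1..?N}" using assms(2) by simp
  qed
  ultimately have "bij_betw (word_perm w) {1..?N} {1..?N}"
    by (intro inj_card_bij) auto
  hence "word_perm w permutes {1..?N}"
    by (rule bij_imp_permutes) (auto simp: word_perm_def)
  thus ?thesis using permutation_permutes by blast
qed

lemma sign_tr:
  assumes "a \<noteq> b" "permutation p"
  shows "sign (transpose a b \<circ> p) = - sign p"
  using assms by (simp add: sign_compose permutation_swap_id sign_swap_id)

lemma rw_map: "reading_word lam (f \<circ> T) = map f (reading_word lam T)"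
  by (simp add: reading_word_def map_concat o_def)

lemma rw_len: "length (reading_word lam T) = sum_list lam"
proof -
  have "length (reading_word lam T) = sum_list (map (\<lambda>i. lam ! i) [0..<length lam])"
    by (simp add: reading_word_def length_concat o_def)
  also have "\<dots> = sum_list lam" by (simp add: map_nth)
  finally show ?thesis .
qed

lemma rw_set: "set (reading_word lam T) = T ` diagram lam"
proof
  show "set (reading_word lam T) \<subseteq> T ` diagram lam"
    by (auto simp: reading_word_def diagram_def)
  show "T ` diagram lam \<subseteq> set (reading_word lam T)"
  proof
    fix y assume "y \<in> T ` diagram lam"
    then obtain i j where "i < length lam" "j < lam ! i" "y = T (i, j)" by (auto simp: diagram_def)
    thus "y \<in> set (reading_word lam T)" unfolding reading_word_def by force
  qed
qed

lemma syt_perm: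
  assumes "T \<in> syt lam"
  shows "permutation (word_perm (reading_word lam T))"
proof -
  let ?w = "reading_word lam T"
  have b: "bij_betw T (diagram lam) {1..psize lam}" using assms by (simp add: syt_def)
  have set: "set ?w = {1..length ?w}"
    using rw_set[of lam T] rw_len[of lam T] b by (simp add: bij_betw_def psize_def)
  have "card (set ?w) = length ?w" using set by simp
  hence "distinct ?w" by (rule card_distinct)
  thus ?thesis using word_perm_perm set by blast
qed

lemma word_perm_map:
  assumes "\<And>k. k \<notin> {1..length w} \<Longrightarrow> f k = k"
  shows "word_perm (map f w) = f \<circ> word_perm w"
  using assms by (auto simp: word_perm_def fun_eq_iff)

lemma tsign_swap:
  assumes "T \<in> syt lam" "1 \<le> a" "Suc a \<le> psize lam"
  shows "tsign lam (transpose a (Suc a) \<circ> T) = - tsign lam T"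
proof -
  have "word_perm (reading_word lam (transpose a (Suc a) \<circ> T)) =
        transpose a (Suc a) \<circ> word_perm (reading_word lam T)"
    unfolding rw_map using assms(2,3)
    by (intro word_perm_map) (auto simp: rw_len psize_def transpose_def)
  thus ?thesis unfolding tsign_def using sign_tr[OF _ syt_perm[OF assms(1)], of a "Suc a"] by simp
qed

lemma tr_less:
  fixes x y a :: nat
  assumes "x < y" "\<not> (x = a \<and> y = Suc a)"
  shows "transpose a (Suc a) x < transpose a (Suc a) y"
  using assms by (auto simp: transpose_def)

definition good :: "nat list \<Rightarrow> nat \<Rightarrow> (nat \<times> nat \<Rightarrow> nat) \<Rightarrow> bool" where
  "good lam a T \<longleftrightarrow> (\<exists>c1\<in>diagram lam. \<exists>c2\<in>diagram lam. T c1 = a \<and> T c2 = Suc a \<and> is_domino {c1, c2})"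

lemma swap_syt:
  assumes "T \<in> syt lam" "1 \<le> a" "Suc a \<le> psize lam" "\<not> good lam a T" "is_partition lam"
  shows "transpose a (Suc a) \<circ> T \<in> syt lam"
proof -
  let ?t = "transpose a (Suc a)"
  have b: "bij_betw T (diagram lam) {1..psize lam}"
    and z: "\<forall>c. c \<notin> diagram lam \<longrightarrow> T c = 0"
    and row: "\<forall>i j. (i, Suc j) \<in> diagram lam \<longrightarrow> T (i, j) < T (i, Suc j)"
    and col: "\<forall>i j. (Suc i, j) \<in> diagram lam \<longrightarrow> T (i, j) < T (Suc i, j)"
    using assms(1) by (auto simp: syt_def)
  have "?t permutes {1..psize lam}" using assms(2,3) by (intro permutes_swap_id) auto
  hence "bij_betw ?t {1..psize lam} {1..psize lam}" by (rule permutes_imp_bij)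
  hence "bij_betw (?t \<circ> T) (diagram lam) {1..psize lam}" using b by (rule bij_betw_trans[rotated])
  moreover have "\<forall>c. c \<notin> diagram lam \<longrightarrow> (?t \<circ> T) c = 0" using z assms(2) by (auto simp: transpose_def)
  moreover have "(?t \<circ> T) (i, j) < (?t \<circ> T) (i, Suc j)" if "(i, Suc j) \<in> diagram lam" for i j
  proof -
    have "(i, j) \<in> diagram lam" using that by (auto simp: diagram_def)
    moreover have "is_domino {(i, j), (i, Suc j)}" unfolding is_domino_def by blast
    ultimately have "\<not> (T (i, j) = a \<and> T (i, Suc j) = Suc a)" using assms(4) that unfolding good_def by blast
    thus ?thesis using row that tr_less by simp
  qed
  moreover have "(?t \<circ> T) (i, j) < (?t \<circ> T) (Suc i, j)" if "(Suc i, j) \<in> diagram lam" for i j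
  proof -
    have "(i, j) \<in> diagram lam" using part_down[OF assms(5) that, of i j] by simp
    moreover have "is_domino {(i, j), (Suc i, j)}" unfolding is_domino_def by blast
    ultimately have "\<not> (T (i, j) = a \<and> T (Suc i, j) = Suc a)" using assms(4) that unfolding good_def by blast
    thus ?thesis using col that tr_less by simp
  qed
  ultimately show ?thesis unfolding syt_def by blast
qed

lemma good_swap_same: "good lam a (transpose a (Suc a) \<circ> T) \<longleftrightarrow> good lam a T"
proof -
  have e1: "transpose a (Suc a) x = a \<longleftrightarrow> x = Suc a" for x by (auto simp: transpose_eq_iff)
  have e2: "transpose a (Suc a) x = Suc a \<longleftrightarrow> x = a" for x by (auto simp: transpose_eq_iff)
  have e3: "is_domino {x, y} = is_domino {y, x}" for x y by (simp add: insert_commute)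
  show ?thesis unfolding good_def o_def e1 e2 using e3 by blast
qed

lemma good_swap_other:
  assumes "a' \<noteq> b" "a' \<noteq> Suc b" "Suc a' \<noteq> b"
  shows "good lam a' (transpose b (Suc b) \<circ> T) \<longleftrightarrow> good lam a' T"
proof -
  have e1: "transpose b (Suc b) x = a' \<longleftrightarrow> x = a'" for x using assms by (auto simp: transpose_eq_iff)
  have e2: "transpose b (Suc b) x = Suc a' \<longleftrightarrow> x = Suc a'" for x using assms by (auto simp: transpose_eq_iff)
  show ?thesis unfolding good_def o_def e1 e2 by blast
qed

lemma diagram_delta: "diagram (delta r) = (if r = 0 then {} else {(0, 0)})"
  by (auto simp: delta_def diagram_def)

lemma part_delta: "is_partition (delta r)"
  by (simp add: delta_def is_partition_def)

lemma domino_pair: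
  assumes "is_domino S"
  shows "\<exists>p q. S = {p, q} \<and> (q = (fst p, Suc (snd p)) \<or> q = (Suc (fst p), snd p))"
proof -
  obtain i j where "S = {(i, j), (i, Suc j)} \<or> S = {(i, j), (Suc i, j)}"
    using assms unfolding is_domino_def by blast
  thus ?thesis
  proof
    assume "S = {(i, j), (i, Suc j)}"
    thus ?thesis by (intro exI[of _ "(i, j)"] exI[of _ "(i, Suc j)"]) simp
  next
    assume "S = {(i, j), (Suc i, j)}"
    thus ?thesis by (intro exI[of _ "(i, j)"] exI[of _ "(Suc i, j)"]) simp
  qed
qed

definition lvl :: "nat list list \<Rightarrow> nat \<times> nat \<Rightarrow> nat" where
  "lvl ch c = (LEAST k. c \<in> diagram (ch ! k))"

locale setting =
  fixes r n :: nat and lam :: "nat list"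
  assumes r01: "r \<in> {0, 1}" and n1: "n \<ge> 1" and lamP: "is_partition lam"
    and sz: "psize lam = r + 2 * n"
begin

lemma sdt_part:
  assumes "ch \<in> sdt r n lam" "k \<le> n"
  shows "is_partition (ch ! k)"
proof (cases "k < n")
  case True thus ?thesis using assms by (auto simp: sdt_def domino_step_def)
next
  case False thus ?thesis using assms lamP by (auto simp: sdt_def)
qed

lemma sdt_mono:
  assumes "ch \<in> sdt r n lam" "k \<le> k'" "k' \<le> n"
  shows "diagram (ch ! k) \<subseteq> diagram (ch ! k')"
  using assms(2,3)
proof (induction k' rule: dec_induct)
  case base thus ?case by simp
next
  case (step m)
  hence "domino_step (ch ! m) (ch ! Suc m)" using assms(1) by (auto simp: sdt_def)
  thus ?case using step by (auto simp: domino_step_def)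
qed

lemma sdt_sub:
  assumes "ch \<in> sdt r n lam" "k \<le> n"
  shows "diagram (ch ! k) \<subseteq> diagram lam"
  using sdt_mono[OF assms(1) assms(2) order_refl] assms(1) by (auto simp: sdt_def)

lemma sdt0: "ch \<in> sdt r n lam \<Longrightarrow> diagram (ch ! 0) = diagram (delta r)"
  by (simp add: sdt_def)

lemma sdt_dom:
  assumes "ch \<in> sdt r n lam" "k \<in> {1..n}"
  shows "is_domino (diagram (ch ! k) - diagram (ch ! (k - 1)))"
proof -
  have "k - 1 < n" using assms(2) by auto
  hence "domino_step (ch ! (k - 1)) (ch ! Suc (k - 1))" using assms(1) by (simp add: sdt_def)
  moreover have "Suc (k - 1) = k" using assms(2) by auto
  ultimately show ?thesis by (simp add: domino_step_def)
qed

lemma lvl_props: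
  assumes "ch \<in> sdt r n lam" "c \<in> diagram lam"
  shows "lvl ch c \<le> n" "c \<in> diagram (ch ! lvl ch c)"
    "lvl ch c \<ge> 1 \<Longrightarrow> c \<notin> diagram (ch ! (lvl ch c - 1))"
proof -
  have cn: "c \<in> diagram (ch ! n)" using assms by (simp add: sdt_def)
  show "lvl ch c \<le> n" unfolding lvl_def using cn by (rule Least_le)
  show "c \<in> diagram (ch ! lvl ch c)" unfolding lvl_def using cn by (rule LeastI)
  show "c \<notin> diagram (ch ! (lvl ch c - 1))" if "lvl ch c \<ge> 1"
    using not_less_Least[of "lvl ch c - 1" "\<lambda>k. c \<in> diagram (ch ! k)"] that
    unfolding lvl_def by simp
qed

lemma lvl_eq:
  assumes "ch \<in> sdt r n lam" "k \<in> {1..n}" "c \<in> diagram (ch ! k) - diagram (ch ! (k - 1))"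
  shows "lvl ch c = k"
  unfolding lvl_def
proof (rule Least_equality)
  show "c \<in> diagram (ch ! k)" using assms by simp
  fix y assume y: "c \<in> diagram (ch ! y)"
  show "k \<le> y"
  proof (rule ccontr)
    assume "\<not> k \<le> y"
    hence "diagram (ch ! y) \<subseteq> diagram (ch ! (k - 1))" using assms(2)
      by (intro sdt_mono[OF assms(1)]) auto
    thus False using y assms(3) by auto
  qed
qed

lemma val0:
  assumes "ch \<in> sdt r n lam" "c \<in> diagram (ch ! 0)"
  shows "dom_to_syt r n ch c = 1"
  using assms(2) by (cases c) (simp add: dom_to_syt_def)

lemma val_out:
  assumes "ch \<in> sdt r n lam" "c \<notin> diagram lam"
  shows "dom_to_syt r n ch c = 0"
proof -
  have "c \<notin> diagram (ch ! k)" if "k \<le> n" for k using sdt_sub[OF assms(1) that] assms(2) by auto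
  thus ?thesis by (cases c) (auto simp: dom_to_syt_def)
qed

lemma valk:
  assumes "ch \<in> sdt r n lam" "k \<in> {1..n}" "c \<in> diagram (ch ! k) - diagram (ch ! (k - 1))"
  shows "dom_to_syt r n ch c =
    (if \<forall>(a, b)\<in>diagram (ch ! k) - diagram (ch ! (k - 1)). fst c + snd c \<le> a + b then r + 2 * k - 1 else r + 2 * k)"
proof -
  have l: "(LEAST k. c \<in> diagram (ch ! k)) = k" using lvl_eq[OF assms] by (simp add: lvl_def)
  have "diagram (ch ! 0) \<subseteq> diagram (ch ! (k - 1))" using assms(2) by (intro sdt_mono[OF assms(1)]) auto
  hence n0: "c \<notin> diagram (ch ! 0)" using assms(3) by auto
  obtain i j where c: "c = (i, j)" by (cases c)
  have ex: "\<exists>k\<in>{1..n}. (i, j) \<in> diagram (ch ! k) - diagram (ch ! (k - 1))" using assms(2,3) c by blast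
  show ?thesis using n0 ex l unfolding c dom_to_syt_def Let_def by simp
qed

lemma DK:
  assumes "ch \<in> sdt r n lam" "k \<in> {1..n}"
  shows "\<exists>p q. diagram (ch ! k) - diagram (ch ! (k - 1)) = {p, q} \<and>
     (q = (fst p, Suc (snd p)) \<or> q = (Suc (fst p), snd p)) \<and>
     p \<in> diagram lam \<and> q \<in> diagram lam \<and>
     dom_to_syt r n ch p = r + 2 * k - 1 \<and> dom_to_syt r n ch q = r + 2 * k"
proof -
  obtain p q where pq: "diagram (ch ! k) - diagram (ch ! (k - 1)) = {p, q}"
    "q = (fst p, Suc (snd p)) \<or> q = (Suc (fst p), snd p)"
    using domino_pair[OF sdt_dom[OF assms]] by blast
  have sub: "diagram (ch ! k) \<subseteq> diagram lam" using assms by (intro sdt_sub[OF assms(1)]) auto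
  have pin: "p \<in> diagram (ch ! k) - diagram (ch ! (k - 1))" using pq(1) by simp
  have qin: "q \<in> diagram (ch ! k) - diagram (ch ! (k - 1))" using pq(1) by simp
  have "\<forall>(a, b)\<in>{p, q}. fst p + snd p \<le> a + b" using pq(2) by auto
  hence "dom_to_syt r n ch p = r + 2 * k - 1"
    using valk[OF assms pin] unfolding pq(1) by presburger
  moreover have "\<not> (\<forall>(a, b)\<in>{p, q}. fst q + snd q \<le> a + b)" using pq(2) by auto
  hence "dom_to_syt r n ch q = r + 2 * k"
    using valk[OF assms qin] unfolding pq(1) by presburger
  ultimately show ?thesis using pq sub by blast
qed

lemma VB:
  assumes "ch \<in> sdt r n lam" "c \<in> diagram lam"
  shows "r + 2 * lvl ch c \<le> dom_to_syt r n ch c + 1 \<and> dom_to_syt r n ch c \<le> r + 2 * lvl ch c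
         \<and> 1 \<le> dom_to_syt r n ch c"
proof (cases "lvl ch c = 0")
  case True
  hence c0: "c \<in> diagram (ch ! 0)" using lvl_props(2)[OF assms] by simp
  hence "r \<noteq> 0" using sdt0[OF assms(1)] diagram_delta[of r] by (auto split: if_splits)
  hence "r = 1" using r01 by auto
  thus ?thesis using True val0[OF assms(1) c0] by simp
next
  case False
  let ?l = "lvl ch c"
  have l: "?l \<in> {1..n}" using False lvl_props(1)[OF assms] by auto
  have cD: "c \<in> diagram (ch ! ?l) - diagram (ch ! (?l - 1))"
    using lvl_props(2,3)[OF assms] False by auto
  obtain p q where pq: "diagram (ch ! ?l) - diagram (ch ! (?l - 1)) = {p, q}"
    "dom_to_syt r n ch p = r + 2 * ?l - 1" "dom_to_syt r n ch q = r + 2 * ?l"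
    using DK[OF assms(1) l] by blast
  have "c = p \<or> c = q" using cD pq(1) by auto
  thus ?thesis using pq(2,3) l by auto
qed

lemma SLV:
  assumes "ch \<in> sdt r n lam" "c \<in> diagram lam" "c' \<in> diagram lam" "c \<noteq> c'"
    "lvl ch c = lvl ch c'"
  shows "\<exists>p q l. l \<in> {1..n} \<and> {c, c'} = {p, q} \<and>
     (q = (fst p, Suc (snd p)) \<or> q = (Suc (fst p), snd p)) \<and>
     dom_to_syt r n ch p = r + 2 * l - 1 \<and> dom_to_syt r n ch q = r + 2 * l"
proof -
  let ?l = "lvl ch c"
  have "?l \<noteq> 0"
  proof
    assume "?l = 0"
    hence "c \<in> diagram (ch ! 0)" "c' \<in> diagram (ch ! 0)"
      using lvl_props(2)[OF assms(1,2)] lvl_props(2)[OF assms(1,3)] assms(5) by auto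
    thus False using sdt0[OF assms(1)] diagram_delta[of r] assms(4) by (auto split: if_splits)
  qed
  hence l: "?l \<in> {1..n}" using lvl_props(1)[OF assms(1,2)] by auto
  have cD: "c \<in> diagram (ch ! ?l) - diagram (ch ! (?l - 1))"
    using lvl_props(2,3)[OF assms(1,2)] \<open>?l \<noteq> 0\<close> by auto
  have cD': "c' \<in> diagram (ch ! ?l) - diagram (ch ! (?l - 1))"
    using lvl_props(2,3)[OF assms(1,3)] \<open>?l \<noteq> 0\<close> assms(5) by auto
  obtain p q where pq: "diagram (ch ! ?l) - diagram (ch ! (?l - 1)) = {p, q}"
    "q = (fst p, Suc (snd p)) \<or> q = (Suc (fst p), snd p)"
    "dom_to_syt r n ch p = r + 2 * ?l - 1" "dom_to_syt r n ch q = r + 2 * ?l"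
    using DK[OF assms(1) l] by blast
  have c1: "c = p \<or> c = q" using cD pq(1) by blast
  have c2: "c' = p \<or> c' = q" using cD' pq(1) by blast
  have "{c, c'} = {p, q}" using c1 c2 assms(4) by auto
  thus ?thesis using pq l by blast
qed

lemma lvl_le:
  assumes "ch \<in> sdt r n lam" "c' \<in> diagram lam" "fst c \<le> fst c'" "snd c \<le> snd c'"
  shows "lvl ch c \<le> lvl ch c'"
proof -
  have "is_partition (ch ! lvl ch c')" using sdt_part[OF assms(1) lvl_props(1)[OF assms(1,2)]] .
  hence "c \<in> diagram (ch ! lvl ch c')"
    using part_down[of "ch ! lvl ch c'" "fst c'" "snd c'" "fst c" "snd c"] lvl_props(2)[OF assms(1,2)] assms(3,4)
    by simp
  thus ?thesis unfolding lvl_def by (rule Least_le)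
qed

lemma MONO:
  assumes "ch \<in> sdt r n lam" "c \<in> diagram lam" "c' \<in> diagram lam"
    "c' = (fst c, Suc (snd c)) \<or> c' = (Suc (fst c), snd c)"
  shows "dom_to_syt r n ch c < dom_to_syt r n ch c'"
proof -
  have le: "lvl ch c \<le> lvl ch c'" using lvl_le[OF assms(1,3), of c] assms(4) by auto
  show ?thesis
  proof (cases "lvl ch c = lvl ch c'")
    case False
    thus ?thesis using le VB[OF assms(1,2)] VB[OF assms(1,3)] by linarith
  next
    case True
    have "c \<noteq> c'" using assms(4) by (cases c) auto
    then obtain p q l where pq: "{c, c'} = {p, q}"
      "q = (fst p, Suc (snd p)) \<or> q = (Suc (fst p), snd p)"
      "dom_to_syt r n ch p = r + 2 * l - 1" "dom_to_syt r n ch q = r + 2 * l" "l \<in> {1..n}"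
      using SLV[OF assms(1,2,3) _ True] by blast
    have "c = p \<and> c' = q \<or> c = q \<and> c' = p" using pq(1) \<open>c \<noteq> c'\<close> by (auto simp: doubleton_eq_iff)
    moreover have "\<not> (c = q \<and> c' = p)"
    proof
      assume "c = q \<and> c' = p"
      hence "p = (fst q, Suc (snd q)) \<or> p = (Suc (fst q), snd q)" using assms(4) by simp
      hence s1: "fst p + snd p = fst q + snd q + 1" by (elim disjE) simp_all
      have s2: "fst q + snd q = fst p + snd p + 1" using pq(2) by (elim disjE) simp_all
      show False using s1 s2 by linarith
    qed
    ultimately show ?thesis using pq(3,4,5) by auto
  qed
qed

lemma INJ:
  assumes "ch \<in> sdt r n lam" "c \<in> diagram lam" "c' \<in> diagram lam"
    "dom_to_syt r n ch c = dom_to_syt r n ch c'"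
  shows "c = c'"
proof (rule ccontr)
  assume ne: "c \<noteq> c'"
  have "lvl ch c = lvl ch c'" using VB[OF assms(1,2)] VB[OF assms(1,3)] assms(4) by linarith
  then obtain p q l where pq: "{c, c'} = {p, q}"
      "dom_to_syt r n ch p = r + 2 * l - 1" "dom_to_syt r n ch q = r + 2 * l" "l \<in> {1..n}"
    using SLV[OF assms(1,2,3) ne] by blast
  have "c = p \<and> c' = q \<or> c = q \<and> c' = p" using pq(1) ne by (auto simp: doubleton_eq_iff)
  thus False using pq(2,3,4) assms(4) by auto
qed

lemma Phi_syt:
  assumes "ch \<in> sdt r n lam"
  shows "dom_to_syt r n ch \<in> syt lam"
proof -
  let ?F = "dom_to_syt r n ch"
  have "inj_on ?F (diagram lam)" using INJ[OF assms] by (auto intro: inj_onI)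
  moreover have "?F ` diagram lam \<subseteq> {1..psize lam}"
  proof
    fix y assume "y \<in> ?F ` diagram lam"
    then obtain c where c: "c \<in> diagram lam" "y = ?F c" by blast
    thus "y \<in> {1..psize lam}" using VB[OF assms c(1)] lvl_props(1)[OF assms c(1)] sz by auto
  qed
  moreover have "card (diagram lam) = card {1..psize lam}" by (simp add: card_diagram psize_def)
  ultimately have "bij_betw ?F (diagram lam) {1..psize lam}" by (intro inj_card_bij) auto
  moreover have "\<forall>c. c \<notin> diagram lam \<longrightarrow> ?F c = 0" using val_out[OF assms] by blast
  moreover have "\<forall>i j. (i, Suc j) \<in> diagram lam \<longrightarrow> ?F (i, j) < ?F (i, Suc j)"
  proof (intro allI impI)
    fix i j assume h: "(i, Suc j) \<in> diagram lam"
    hence "(i, j) \<in> diagram lam" by (auto simp: diagram_def)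
    thus "?F (i, j) < ?F (i, Suc j)" using MONO[OF assms _ h] by simp
  qed
  moreover have "\<forall>i j. (Suc i, j) \<in> diagram lam \<longrightarrow> ?F (i, j) < ?F (Suc i, j)"
  proof (intro allI impI)
    fix i j assume h: "(Suc i, j) \<in> diagram lam"
    hence "(i, j) \<in> diagram lam" using part_down[OF lamP h, of i j] by simp
    thus "?F (i, j) < ?F (Suc i, j)" using MONO[OF assms _ h] by simp
  qed
  ultimately show ?thesis unfolding syt_def by blast
qed

lemma Phi_good:
  assumes "ch \<in> sdt r n lam" "k \<in> {1..n}"
  shows "good lam (r + 2 * k - 1) (dom_to_syt r n ch)"
proof -
  obtain p q where pq: "q = (fst p, Suc (snd p)) \<or> q = (Suc (fst p), snd p)"
     "p \<in> diagram lam" "q \<in> diagram lam"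
     "dom_to_syt r n ch p = r + 2 * k - 1" "dom_to_syt r n ch q = r + 2 * k"
    using DK[OF assms] by blast
  have "is_domino {p, q}" unfolding is_domino_def using pq(1) by (cases p) auto
  moreover have "Suc (r + 2 * k - 1) = r + 2 * k" using assms(2) by auto
  ultimately show ?thesis unfolding good_def using pq by metis
qed

lemma lvl_char:
  assumes "ch \<in> sdt r n lam" "c \<in> diagram lam"
  shows "lvl ch c = (dom_to_syt r n ch c + 1 - r) div 2"
  using VB[OF assms] by linarith

lemma diag_char:
  assumes "ch \<in> sdt r n lam" "k \<le> n"
  shows "diagram (ch ! k) = {c \<in> diagram lam. (dom_to_syt r n ch c + 1 - r) div 2 \<le> k}"
proof (intro set_eqI iffI)
  fix c assume c: "c \<in> diagram (ch ! k)"
  hence cl: "c \<in> diagram lam" using sdt_sub[OF assms] by auto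
  have "lvl ch c \<le> k" unfolding lvl_def using c by (rule Least_le)
  thus "c \<in> {c \<in> diagram lam. (dom_to_syt r n ch c + 1 - r) div 2 \<le> k}"
    using cl lvl_char[OF assms(1) cl] by simp
next
  fix c assume "c \<in> {c \<in> diagram lam. (dom_to_syt r n ch c + 1 - r) div 2 \<le> k}"
  hence cl: "c \<in> diagram lam" and "lvl ch c \<le> k" using lvl_char[OF assms(1)] by auto
  thus "c \<in> diagram (ch ! k)" using lvl_props(2)[OF assms(1) cl] sdt_mono[OF assms(1) _ assms(2)] by blast
qed

lemma Phi_inj: "inj_on (dom_to_syt r n) (sdt r n lam)"
proof
  fix ch1 ch2 assume h: "ch1 \<in> sdt r n lam" "ch2 \<in> sdt r n lam" "dom_to_syt r n ch1 = dom_to_syt r n ch2"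
  show "ch1 = ch2"
  proof (rule nth_equalityI)
    show "length ch1 = length ch2" using h by (simp add: sdt_def)
    fix k assume "k < length ch1"
    hence k: "k \<le> n" using h by (simp add: sdt_def)
    have "diagram (ch1 ! k) = diagram (ch2 ! k)" using diag_char[OF h(1) k] diag_char[OF h(2) k] h(3) by simp
    thus "ch1 ! k = ch2 ! k" using part_eq sdt_part[OF h(1) k] sdt_part[OF h(2) k] by blast
  qed
qed

lemma T_row:
  assumes "T \<in> syt lam" "(i, j) \<in> diagram lam" "j' \<le> j"
  shows "T (i, j') \<le> T (i, j)"
  using assms(2,3)
proof (induction j)
  case 0 thus ?case by simp
next
  case (Suc j)
  show ?case
  proof (cases "j' = Suc j")
    case True thus ?thesis by simp
  next
    case False
    hence "j' \<le> j" using Suc by simp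
    moreover have "(i, j) \<in> diagram lam" using Suc(2) by (auto simp: diagram_def)
    ultimately have "T (i, j') \<le> T (i, j)" using Suc by blast
    moreover have "T (i, j) < T (i, Suc j)" using assms(1) Suc(2) by (auto simp: syt_def)
    ultimately show ?thesis by simp
  qed
qed

lemma T_col:
  assumes "T \<in> syt lam" "(i, j) \<in> diagram lam" "i' \<le> i"
  shows "T (i', j) \<le> T (i, j)"
  using assms(2,3)
proof (induction i)
  case 0 thus ?case by simp
next
  case (Suc i)
  show ?case
  proof (cases "i' = Suc i")
    case True thus ?thesis by simp
  next
    case False
    hence "i' \<le> i" using Suc by simp
    moreover have "(i, j) \<in> diagram lam" using part_down[OF lamP Suc(2), of i j] by simp
    ultimately have "T (i', j) \<le> T (i, j)" using Suc by blast
    moreover have "T (i, j) < T (Suc i, j)" using assms(1) Suc(2) by (auto simp: syt_def)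
    ultimately show ?thesis by simp
  qed
qed

lemma T_le:
  assumes "T \<in> syt lam" "(i, j) \<in> diagram lam" "i' \<le> i" "j' \<le> j"
  shows "T (i', j') \<le> T (i, j)"
proof -
  have "(i', j) \<in> diagram lam" using part_down[OF lamP assms(2) assms(3)] by simp
  hence "T (i', j') \<le> T (i', j)" using T_row[OF assms(1)] assms(4) by blast
  also have "\<dots> \<le> T (i, j)" using T_col[OF assms(1,2,3)] .
  finally show ?thesis .
qed

lemma T_nxt:
  assumes "T \<in> syt lam" "q \<in> diagram lam" "q = (fst p, Suc (snd p)) \<or> q = (Suc (fst p), snd p)"
  shows "T p < T q"
  using assms by (cases p) (auto simp: syt_def)

lemma Phi_surj:
  assumes T: "T \<in> syt lam" and G: "\<forall>k\<in>{1..n}. good lam (r + 2 * k - 1) T"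
  shows "\<exists>ch\<in>sdt r n lam. dom_to_syt r n ch = T"
proof -
  have bij: "bij_betw T (diagram lam) {1..psize lam}"
    and z: "\<forall>c. c \<notin> diagram lam \<longrightarrow> T c = 0" using T by (auto simp: syt_def)
  have inj: "c = c'" if "c \<in> diagram lam" "c' \<in> diagram lam" "T c = T c'" for c c'
    using bij that by (auto simp: bij_betw_def inj_on_def)
  have rng: "T c \<in> {1..psize lam}" if "c \<in> diagram lam" for c
    using bij that by (auto simp: bij_betw_def)
  define S where "S k = {c \<in> diagram lam. T c \<le> r + 2 * k}" for k
  have "\<exists>mu. is_partition mu \<and> diagram mu = S k" for k
  proof (rule downclosed_part)
    show "finite (S k)" unfolding S_def by simp
    fix i j i' j' assume h: "(i, j) \<in> S k" "i' \<le> i" "j' \<le> j"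
    hence "(i', j') \<in> diagram lam" using part_down[OF lamP] unfolding S_def by blast
    moreover have "T (i', j') \<le> T (i, j)" using T_le[OF T _ h(2,3)] h(1) unfolding S_def by blast
    ultimately show "(i', j') \<in> S k" using h(1) unfolding S_def by auto
  qed
  then obtain mu where mu: "\<And>k. is_partition (mu k) \<and> diagram (mu k) = S k" by metis
  define ch where "ch = map mu [0..<Suc n]"
  have chk: "ch ! k = mu k" if "k \<le> n" for k using that unfolding ch_def
    by (simp del: upt_Suc add: nth_map_upt)
  have S0: "S 0 = diagram (delta r)"
  proof (cases "r = 0")
    case True thus ?thesis using rng unfolding S_def by (force simp: diagram_delta)
  next
    case False
    hence r1: "r = 1" using r01 by auto
    have "1 \<in> {1..psize lam}" using sz n1 by simp
    hence "1 \<in> T ` diagram lam" using bij by (simp add: bij_betw_def)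
    then obtain c where c: "c \<in> diagram lam" "T c = 1" by (metis imageE)
    have c00: "(0, 0) \<in> diagram lam" using part_down[OF lamP, of "fst c" "snd c" 0 0] c by simp
    have "T (0, 0) \<le> T c" using T_le[OF T, of "fst c" "snd c" 0 0] c by simp
    hence "T (0, 0) = 1" using rng[OF c00] c by simp
    hence "S 0 = {(0, 0)}" unfolding S_def using c00 r1 rng inj by force
    thus ?thesis using r1 diagram_delta by simp
  qed
  have "ch \<in> sdt r n lam"
    unfolding sdt_def
  proof (intro CollectI conjI allI impI)
    show "length ch = Suc n" unfolding ch_def by simp
    show "ch ! 0 = delta r" using chk[of 0] mu[of 0] S0 part_eq part_delta by simp
    have "S n = diagram lam" unfolding S_def using rng sz by auto
    thus "ch ! n = lam" using chk[of n] mu[of n] part_eq lamP by simp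
    fix k assume k: "k < n"
    have sub: "S k \<subseteq> S (Suc k)" unfolding S_def by auto
    obtain c1 c2 where cc: "c1 \<in> diagram lam" "c2 \<in> diagram lam" "T c1 = r + 2 * Suc k - 1"
      "T c2 = Suc (r + 2 * Suc k - 1)" "is_domino {c1, c2}"
      using G k unfolding good_def by (metis atLeastAtMost_iff le_add1 plus_1_eq_Suc Suc_leI)
    have "S (Suc k) - S k = {c1, c2}"
    proof (intro set_eqI iffI)
      fix c assume "c \<in> S (Suc k) - S k"
      hence c: "c \<in> diagram lam" "T c = r + 2 * Suc k - 1 \<or> T c = Suc (r + 2 * Suc k - 1)"
        unfolding S_def by auto
      thus "c \<in> {c1, c2}" using inj[OF c(1) cc(1)] inj[OF c(1) cc(2)] cc(3,4) by auto
    next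
      fix c assume "c \<in> {c1, c2}"
      thus "c \<in> S (Suc k) - S k" using cc unfolding S_def by auto
    qed
    thus "domino_step (ch ! k) (ch ! Suc k)"
      unfolding domino_step_def using chk[of k] chk[of "Suc k"] k mu[of k] mu[of "Suc k"] sub cc(5)
      by simp
  qed
  moreover have "dom_to_syt r n ch = T"
  proof
    fix c
    show "dom_to_syt r n ch c = T c"
    proof (cases "c \<in> diagram lam")
      case False thus ?thesis using val_out[OF \<open>ch \<in> _\<close> False] z by metis
    next
      case True
      note chs = \<open>ch \<in> sdt r n lam\<close>
      let ?l = "lvl ch c"
      show ?thesis
      proof (cases "?l = 0")
        case l0: True
        hence c0: "c \<in> diagram (ch ! 0)" using lvl_props(2)[OF chs True] by simp
        hence "c \<in> S 0" using chk[of 0] mu[of 0] by simp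
        hence "T c \<le> 1" unfolding S_def using r01 by auto
        thus ?thesis using val0[OF chs c0] rng[OF True] by simp
      next
        case False
        have l: "?l \<in> {1..n}" using False lvl_props(1)[OF chs True] by auto
        have dl: "diagram (ch ! ?l) - diagram (ch ! (?l - 1)) = S ?l - S (?l - 1)"
        proof -
          have "?l - 1 \<le> n" "?l \<le> n" using l by auto
          thus ?thesis using chk[of ?l] chk[of "?l - 1"] mu[of ?l] mu[of "?l - 1"] by simp
        qed
        obtain p q where pq: "diagram (ch ! ?l) - diagram (ch ! (?l - 1)) = {p, q}"
          "q = (fst p, Suc (snd p)) \<or> q = (Suc (fst p), snd p)"
          "dom_to_syt r n ch p = r + 2 * ?l - 1" "dom_to_syt r n ch q = r + 2 * ?l"
          using DK[OF chs l] by blast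
        have cD: "c \<in> {p, q}"
          using lvl_props(2,3)[OF chs True] False pq(1) by auto
        have inS: "x \<in> diagram lam \<and> r + 2 * (?l - 1) < T x \<and> T x \<le> r + 2 * ?l" if "x \<in> {p, q}" for x
        proof -
          have "x \<in> S ?l - S (?l - 1)" using that pq(1) dl by blast
          thus ?thesis unfolding S_def by auto
        qed
        have "T p < T q" using T_nxt[OF T _ pq(2)] inS[of q] by simp
        hence "T p = r + 2 * ?l - 1" "T q = r + 2 * ?l" using inS[of p] inS[of q] l by auto
        thus ?thesis using cD pq(3,4) by auto
      qed
    qed
  qed
  ultimately show ?thesis by blast
qed

end

lemma finite_syt: "finite (syt lam)"
proof (rule inj_on_finite)
  let ?D = "diagram lam"
  show "inj_on (\<lambda>T. restrict T ?D) (syt lam)"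
  proof
    fix T T' assume h: "T \<in> syt lam" "T' \<in> syt lam" "restrict T ?D = restrict T' ?D"
    show "T = T'"
    proof
      fix x show "T x = T' x"
      proof (cases "x \<in> ?D")
        case True thus ?thesis using h(3) by (metis restrict_apply')
      next
        case False
        have "T x = 0" "T' x = 0" using h(1,2) False unfolding syt_def by blast+
        thus ?thesis by simp
      qed
    qed
  qed
  show "(\<lambda>T. restrict T ?D) ` syt lam \<subseteq> PiE ?D (\<lambda>_. {1..psize lam})"
    by (auto simp: syt_def bij_betw_def)
  show "finite (PiE ?D (\<lambda>_. {1..psize lam}))" by (intro finite_PiE) auto
qed

lemma sum_invol_zero:
  fixes f :: "'a \<Rightarrow> int"
  assumes "finite A" "\<And>x. x \<in> A \<Longrightarrow> s x \<in> A" "\<And>x. x \<in> A \<Longrightarrow> s (s x) = x"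
    "\<And>x. x \<in> A \<Longrightarrow> f (s x) = - f x"
  shows "sum f A = 0"
proof -
  have "sum f A = sum (\<lambda>x. f (s x)) A"
    by (rule sum.reindex_bij_witness[of A s s]) (use assms in auto)
  also have "\<dots> = - sum f A" using assms(4) by (simp add: sum_negf)
  finally show ?thesis by simp
qed

theorem proposition4p1:
  fixes r n :: nat and lam :: "nat list"
  assumes "r \<in> {0, 1}" and "n \<ge> 1" and "lam \<in> P_set r n"
  shows "I_lam lam = (\<Sum>D\<in>sdt r n lam. dsign r n lam D)"
proof -
  have lamP: "is_partition lam" and sz0: "psize lam = psize (delta r) + 2 * n"
    using assms(3) by (auto simp: P_set_def)
  have "psize (delta r) = r" using assms(1) by (auto simp: delta_def psize_def)
  hence sz: "psize lam = r + 2 * n" using sz0 by simp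
  interpret setting r n lam using assms(1,2) lamP sz by unfold_locales auto
  define G where "G = {T \<in> syt lam. \<forall>k\<in>{1..n}. good lam (r + 2 * k - 1) T}"
  define B where "B = syt lam - G"
  define bad where "bad T = {k \<in> {1..n}. \<not> good lam (r + 2 * k - 1) T}" for T
  define sw where "sw T = (let a = r + 2 * Min (bad T) - 1 in transpose a (Suc a) \<circ> T)" for T
  have fin: "finite (syt lam)" by (rule finite_syt)
  have props: "sw T \<in> B \<and> sw (sw T) = T \<and> tsign lam (sw T) = - tsign lam T" if TB: "T \<in> B" for T
  proof -
    have T: "T \<in> syt lam" and ne: "bad T \<noteq> {}" using TB unfolding B_def G_def bad_def by auto
    have finb: "finite (bad T)" unfolding bad_def by simp
    define k0 where "k0 = Min (bad T)"
    have k0: "k0 \<in> bad T" unfolding k0_def using finb ne by (rule Min_in)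
    hence k0n: "k0 \<in> {1..n}" "\<not> good lam (r + 2 * k0 - 1) T" unfolding bad_def by auto
    define a where "a = r + 2 * k0 - 1"
    have swT: "sw T = transpose a (Suc a) \<circ> T" unfolding sw_def a_def k0_def Let_def by simp
    have a1: "1 \<le> a" "Suc a \<le> psize lam" using k0n(1) sz unfolding a_def by auto
    have syt': "sw T \<in> syt lam" unfolding swT using swap_syt[OF T a1 _ lamP] k0n(2) a_def by simp
    have gd: "good lam (r + 2 * k - 1) (sw T) \<longleftrightarrow> good lam (r + 2 * k - 1) T" if "k \<in> {1..n}" for k
    proof (cases "k = k0")
      case True thus ?thesis unfolding swT a_def using good_swap_same by simp
    next
      case False
      have "r + 2 * k - 1 \<noteq> a" "r + 2 * k - 1 \<noteq> Suc a" "Suc (r + 2 * k - 1) \<noteq> a"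
        using False that k0n(1) unfolding a_def by auto
      thus ?thesis unfolding swT by (rule good_swap_other)
    qed
    hence bad_eq: "bad (sw T) = bad T" unfolding bad_def by auto
    have "sw T \<in> B" using syt' ne bad_eq unfolding B_def G_def bad_def by auto
    moreover have "sw (sw T) = T"
    proof -
      have "sw (sw T) = transpose a (Suc a) \<circ> sw T"
        by (simp only: sw_def[of "sw T"] Let_def bad_eq a_def k0_def)
      thus ?thesis unfolding swT by (simp add: fun_eq_iff)
    qed
    moreover have "tsign lam (sw T) = - tsign lam T" unfolding swT using tsign_swap[OF T a1] .
    ultimately show ?thesis by blast
  qed
  have "sum (tsign lam) B = 0"
    by (rule sum_invol_zero[of B sw]) (use props fin in \<open>auto simp: B_def\<close>)
  moreover have "I_lam lam = sum (tsign lam) G + sum (tsign lam) B"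
  proof -
    have "G \<subseteq> syt lam" unfolding G_def by auto
    thus ?thesis unfolding I_lam_def B_def using sum.subset_diff[OF _ fin] by (simp add: add.commute)
  qed
  moreover have "sum (tsign lam) G = (\<Sum>D\<in>sdt r n lam. dsign r n lam D)"
  proof -
    have "bij_betw (dom_to_syt r n) (sdt r n lam) G"
      unfolding bij_betw_def
    proof
      show "inj_on (dom_to_syt r n) (sdt r n lam)" by (rule Phi_inj)
      show "dom_to_syt r n ` sdt r n lam = G"
      proof
        show "dom_to_syt r n ` sdt r n lam \<subseteq> G" unfolding G_def using Phi_syt Phi_good by auto
        show "G \<subseteq> dom_to_syt r n ` sdt r n lam" unfolding G_def using Phi_surj by fastforce
      qed
    qed
    thus ?thesis unfolding dsign_def by (rule sum.reindex_bij_betw[symmetric])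
  qed
  ultimately show ?thesis by simp
qed

end
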